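(* Let $\sigma=(\sigma_1,\dots,\sigma_N):\Delta_d\to\mathbb{R}^N$ be continuous and of class $C^1$ on every open face of $\Delta_d$. Then $\sigma$ has finite volume if and only if for every subset $\{i_1,\dots,i_d\}\subset\{1,\dots,N\}$ the integral $\int_{\Delta_d}\sigma^*(\mathrm{d}x_{i_1}\wedge\dots\wedge\mathrm{d}x_{i_d})$ converges absolutely.
   Context: The standard $d$-simplex is $\Delta_d=\{(a_1,\dots,a_d)\in\mathbb{R}^d\mid a_i\ge 0,\ \sum a_i\le 1\}$. An open face of $\Delta_d$ is the interior of a face (of any dimension) of $\Delta_d$. The pull-back $\sigma^*(\omega)$ of a form is defined on the interior of $\Delta_d$, where $\sigma$ is $C^1$. Such a $\sigma$ is said to have finite volume if $\int_{\Delta_d}\sigma^*(\omega)$ converges absolutely for every continuous $d$-form $\omega$ on $\sigma(\Delta_d)$. *)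

theory Defs
  imports "HOL-Analysis.Analysis"
begin

definition std_simplex :: "(real ^ 'd) set" where
  "std_simplex = {a. (\<forall>i. 0 \<le> a $ i) \<and> (\<Sum>i\<in>UNIV. a $ i) \<le> 1}"

definition C1_on :: "('a::real_normed_vector \<Rightarrow> 'b::real_normed_vector) \<Rightarrow> 'a set \<Rightarrow> bool" where
  "C1_on f S \<longleftrightarrow> (\<exists>D. (\<forall>x\<in>S. (f has_derivative blinfun_apply (D x)) (at x within S))
                        \<and> continuous_on S D)"

definition continuous_dform ::
  "(real ^ 'n) set \<Rightarrow> (real ^ 'n \<Rightarrow> ('d \<Rightarrow> real ^ 'n) \<Rightarrow> real) \<Rightarrow> bool" where
  "continuous_dform K \<omega> \<longleftrightarrow>
     (\<forall>x\<in>K. (\<forall>v i. linear (\<lambda>u. \<omega> x (v(i := u))))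
           \<and> (\<forall>v i j. i \<noteq> j \<and> v i = v j \<longrightarrow> \<omega> x v = 0))
     \<and> (\<forall>v. continuous_on K (\<lambda>x. \<omega> x v))"

text \<open>Pull-back of \<omega> by \<sigma>, as the coefficient of da_1 \<and> ... \<and> da_d at an interior point a.\<close>
definition pullback_coeff ::
  "(real ^ 'n \<Rightarrow> ('d \<Rightarrow> real ^ 'n) \<Rightarrow> real) \<Rightarrow> (real ^ 'd \<Rightarrow> real ^ 'n) \<Rightarrow> real ^ 'd \<Rightarrow> real" where
  "pullback_coeff \<omega> \<sigma> a = \<omega> (\<sigma> a) (\<lambda>j. frechet_derivative \<sigma> (at a) (axis j 1))"

definition finite_volume :: "(real ^ 'd \<Rightarrow> real ^ 'n) \<Rightarrow> bool" where
  "finite_volume \<sigma> \<longleftrightarrow>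
     (\<forall>\<omega> :: real ^ 'n \<Rightarrow> ('d \<Rightarrow> real ^ 'n) \<Rightarrow> real.
        continuous_dform (\<sigma> ` std_simplex) \<omega> \<longrightarrow>
        pullback_coeff \<omega> \<sigma> absolutely_integrable_on interior std_simplex)"

text \<open>Pull-back of dx_{\<iota> 1} \<and> ... \<and> dx_{\<iota> d}: the d x d minor of the Jacobian.\<close>
definition pullback_coord_coeff :: "('d \<Rightarrow> 'n) \<Rightarrow> (real ^ 'd \<Rightarrow> real ^ 'n) \<Rightarrow> real ^ 'd \<Rightarrow> real" where
  "pullback_coord_coeff \<iota> \<sigma> a = det (\<chi> k j. frechet_derivative \<sigma> (at a) (axis j 1) $ \<iota> k)"

end

theory Submission
  imports Defs
begin

lemma multilin_expand_aux:
  fixes f :: "('d \<Rightarrow> 'v::real_vector) \<Rightarrow> real"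
  assumes lin: "\<And>v i. linear (\<lambda>u. f (v(i := u)))" and fin: "finite I" and T: "finite T"
  shows "f (\<lambda>j. if j \<in> T then (\<Sum>i\<in>I. a j i *\<^sub>R b i) else u j) =
     (\<Sum>\<iota>\<in>T \<rightarrow>\<^sub>E I. (\<Prod>j\<in>T. a j (\<iota> j)) * f (\<lambda>j. if j \<in> T then b (\<iota> j) else u j))"
  using T
proof (induction T arbitrary: u rule: finite_induct)
  case empty
  then show ?case by simp
next
  case (insert t T)
  define w where "w = (\<lambda>j. if j \<in> T then (\<Sum>i\<in>I. a j i *\<^sub>R b i) else u j)"
  have "(\<lambda>j. if j \<in> insert t T then (\<Sum>i\<in>I. a j i *\<^sub>R b i) else u j) = w(t := (\<Sum>i\<in>I. a t i *\<^sub>R b i))"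
    using insert by (auto simp: w_def)
  then have "f (\<lambda>j. if j \<in> insert t T then (\<Sum>i\<in>I. a j i *\<^sub>R b i) else u j) =
     (\<Sum>i\<in>I. a t i * f (w(t := b i)))"
    using linear_sum[OF lin[of w t], of "\<lambda>i. a t i *\<^sub>R b i" I] linear_cmul[OF lin[of w t]]
    by simp
  also have "\<dots> = (\<Sum>i\<in>I. a t i * (\<Sum>\<iota>\<in>T \<rightarrow>\<^sub>E I. (\<Prod>j\<in>T. a j (\<iota> j)) * f (\<lambda>j. if j \<in> T then b (\<iota> j) else (u(t := b i)) j)))"
  proof (rule sum.cong[OF refl])
    fix i assume "i \<in> I"
    have "w(t := b i) = (\<lambda>j. if j \<in> T then (\<Sum>i\<in>I. a j i *\<^sub>R b i) else (u(t := b i)) j)"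
      using insert by (auto simp: w_def)
    then show "a t i * f (w(t := b i)) = a t i * (\<Sum>\<iota>\<in>T \<rightarrow>\<^sub>E I. (\<Prod>j\<in>T. a j (\<iota> j)) * f (\<lambda>j. if j \<in> T then b (\<iota> j) else (u(t := b i)) j))"
      using insert.IH[of "u(t := b i)"] by simp
  qed
  also have "\<dots> = (\<Sum>(i,\<iota>)\<in>I \<times> (T \<rightarrow>\<^sub>E I). (\<Prod>j\<in>insert t T. a j ((\<iota>(t:=i)) j)) * f (\<lambda>j. if j \<in> insert t T then b ((\<iota>(t:=i)) j) else u j))"
    unfolding sum.cartesian_product[symmetric] sum_distrib_left
  proof (intro sum.cong refl)
    fix i \<iota> assume "i \<in> I" "\<iota> \<in> T \<rightarrow>\<^sub>E I"
    have p: "(\<Prod>j\<in>insert t T. a j ((\<iota>(t:=i)) j)) = a t i * (\<Prod>j\<in>T. a j (\<iota> j))"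
    proof -
      have "(\<Prod>j\<in>T. a j ((\<iota>(t:=i)) j)) = (\<Prod>j\<in>T. a j (\<iota> j))"
        using insert.hyps by (intro prod.cong) auto
      then show ?thesis using insert.hyps by simp
    qed
    have q: "(\<lambda>j. if j \<in> T then b (\<iota> j) else (u(t := b i)) j) = (\<lambda>j. if j \<in> insert t T then b ((\<iota>(t:=i)) j) else u j)"
      using insert by auto
    show "a t i * ((\<Prod>j\<in>T. a j (\<iota> j)) * f (\<lambda>j. if j \<in> T then b (\<iota> j) else (u(t := b i)) j)) =
      (\<Prod>j\<in>insert t T. a j ((\<iota>(t:=i)) j)) * f (\<lambda>j. if j \<in> insert t T then b ((\<iota>(t:=i)) j) else u j)"
      unfolding p q by simp
  qed
  also have "\<dots> = (\<Sum>\<iota>\<in>insert t T \<rightarrow>\<^sub>E I. (\<Prod>j\<in>insert t T. a j (\<iota> j)) * f (\<lambda>j. if j \<in> insert t T then b (\<iota> j) else u j))"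
    using insert.hyps
    by (intro sum.reindex_bij_witness[of _ "\<lambda>g. (g t, g(t := undefined))" "\<lambda>(y,g). g(t := y)"])
       (auto simp: PiE_def extensional_def)
  finally show ?case .
qed

lemma multilin_expand:
  fixes f :: "('d::finite \<Rightarrow> real ^ 'n) \<Rightarrow> real"
  assumes lin: "\<And>v i. linear (\<lambda>u. f (v(i := u)))"
  shows "f w = (\<Sum>\<iota>\<in>UNIV. (\<Prod>j\<in>UNIV. w j $ \<iota> j) * f (\<lambda>j. axis (\<iota> j) 1))"
proof -
  have w: "w = (\<lambda>j. if j \<in> UNIV then (\<Sum>i\<in>UNIV. (w j $ i) *\<^sub>R axis i 1) else w j)"
    by (simp add: scalar_mult_eq_scaleR[symmetric] basis_expansion)
  show ?thesis
    apply (subst w)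
    apply (subst multilin_expand_aux[OF lin])
    by auto
qed

lemma alt_swap:
  fixes f :: "('d \<Rightarrow> 'v::real_vector) \<Rightarrow> real"
  assumes lin: "\<And>v i. linear (\<lambda>u. f (v(i := u)))"
    and alt: "\<And>v i j. i \<noteq> j \<Longrightarrow> v i = v j \<Longrightarrow> f v = 0"
    and ab: "a \<noteq> b"
  shows "f (v \<circ> Transposition.transpose a b) = - f v"
proof -
  define g where "g x y = f (v(a := x, b := y))" for x y
  have g2: "g x y = f ((v(b := y))(a := x))" for x y
    unfolding g_def using ab by (metis fun_upd_twist)
  have la: "g (x + y) z = g x z + g y z" for x y z
    unfolding g2 using linear_add[OF lin[of "v(b:=z)" a]] by simp
  have lb: "g z (x + y) = g z x + g z y" for x y z
    unfolding g_def using linear_add[OF lin[of "v(a:=z)" b]] by simp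
  have z: "g x x = 0" for x
    unfolding g_def using ab by (intro alt[of a b]) auto
  have "0 = g (v a + v b) (v a + v b)" using z by simp
  also have "\<dots> = g (v a) (v b) + g (v b) (v a)"
    by (simp only: la lb) (simp add: z)
  finally have *: "g (v b) (v a) = - g (v a) (v b)" by simp
  have e1: "g (v a) (v b) = f v" unfolding g_def by simp
  have e2: "v \<circ> Transposition.transpose a b = v(a := v b, b := v a)"
    using ab by (auto simp: Transposition.transpose_def)
  show ?thesis using * unfolding e1 e2 g_def by simp
qed

lemma alt_perm:
  fixes f :: "('d::finite \<Rightarrow> 'v::real_vector) \<Rightarrow> real"
  assumes lin: "\<And>v i. linear (\<lambda>u. f (v(i := u)))"
    and alt: "\<And>v i j. i \<noteq> j \<Longrightarrow> v i = v j \<Longrightarrow> f v = 0"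
    and p: "p permutes (UNIV :: 'd set)"
  shows "f (v \<circ> p) = of_int (sign p) * f v"
proof -
  have "\<forall>v. f (v \<circ> p) = of_int (sign p) * f v"
    using p finite_class.finite_UNIV
  proof (induction p rule: permutes_induct)
    case id
    then show ?case by simp
  next
    case (swap a b p)
    have pp: "permutation p" using swap by (meson finite_class.finite_UNIV permutation_permutes)
    have pt: "permutation (Transposition.transpose a b)" by (simp add: permutation_swap_id)
    show ?case
    proof
      fix v
      have "f (v \<circ> (Transposition.transpose a b \<circ> p)) = f ((v \<circ> Transposition.transpose a b) \<circ> p)"
        by (simp add: o_assoc)
      also have "\<dots> = of_int (sign p) * f (v \<circ> Transposition.transpose a b)"
        using swap by blast
      also have "\<dots> = - of_int (sign p) * f v"
        using alt_swap[where f=f, OF lin alt \<open>a \<noteq> b\<close>] by simp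
      finally show "f (v \<circ> (Transposition.transpose a b \<circ> p)) = of_int (sign (Transposition.transpose a b \<circ> p)) * f v"
        using \<open>a \<noteq> b\<close> by (simp add: sign_compose[OF pt pp] sign_swap_id)
    qed
  qed
  then show ?thesis by blast
qed

lemma alt_det_sum:
  fixes f :: "('d::finite \<Rightarrow> real ^ 'n) \<Rightarrow> real"
  assumes lin: "\<And>v i. linear (\<lambda>u. f (v(i := u)))"
    and alt: "\<And>v i j. i \<noteq> j \<Longrightarrow> v i = v j \<Longrightarrow> f v = 0"
  shows "f w = (1 / fact CARD('d)) *
     (\<Sum>\<iota>\<in>{\<iota>::'d\<Rightarrow>'n. inj \<iota>}. f (\<lambda>j. axis (\<iota> j) 1) * det (\<chi> k j. w j $ \<iota> k))"
proof -
  define c where "c \<iota> = f (\<lambda>j. axis (\<iota> j) 1)" for \<iota> :: "'d \<Rightarrow> 'n"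
  define P where "P \<iota> = (\<Prod>j\<in>UNIV. w j $ \<iota> j)" for \<iota> :: "'d \<Rightarrow> 'n"
  let ?I = "{\<iota>::'d\<Rightarrow>'n. inj \<iota>}"
  let ?Pm = "{p. p permutes (UNIV::'d set)}"
  have c0: "c \<iota> = 0" if "\<not> inj \<iota>" for \<iota>
  proof -
    obtain i j where "i \<noteq> j" "\<iota> i = \<iota> j" using \<open>\<not> inj \<iota>\<close> unfolding inj_def by blast
    then show ?thesis unfolding c_def by (intro alt[of i j]) auto
  qed
  have s1: "f w = (\<Sum>\<iota>\<in>?I. P \<iota> * c \<iota>)"
  proof -
    have "f w = (\<Sum>\<iota>\<in>UNIV. P \<iota> * c \<iota>)"
      unfolding P_def c_def by (rule multilin_expand[OF lin])
    also have "\<dots> = (\<Sum>\<iota>\<in>?I. P \<iota> * c \<iota>)"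
      by (rule sum.mono_neutral_right) (auto simp: c0)
    finally show ?thesis .
  qed
  have inner: "(\<Sum>\<iota>\<in>?I. of_int (sign p) * c \<iota> * (\<Prod>k\<in>UNIV. w (p k) $ \<iota> k)) = (\<Sum>\<iota>\<in>?I. P \<iota> * c \<iota>)"
    if p: "p permutes (UNIV::'d set)" for p
  proof -
    have "(\<Sum>\<iota>\<in>?I. of_int (sign p) * c \<iota> * (\<Prod>k\<in>UNIV. w (p k) $ \<iota> k)) =
          (\<Sum>\<kappa>\<in>?I. of_int (sign p) * c (\<kappa> \<circ> p) * (\<Prod>k\<in>UNIV. w (p k) $ (\<kappa> \<circ> p) k))"
    proof -
      have "bij_betw (\<lambda>\<kappa>. \<kappa> \<circ> p) ?I ?I"
      proof (rule bij_betw_byWitness[where f'="\<lambda>\<iota>. \<iota> \<circ> inv p"])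
        show "\<forall>a\<in>?I. a \<circ> p \<circ> inv p = a" using permutes_inverses(1)[OF p] by (auto simp: o_def)
        show "\<forall>a\<in>?I. a \<circ> inv p \<circ> p = a" using permutes_inverses(2)[OF p] by (auto simp: o_def)
        show "(\<lambda>\<kappa>. \<kappa> \<circ> p) ` ?I \<subseteq> ?I" using permutes_inj[OF p] by (auto intro: inj_compose)
        show "(\<lambda>\<iota>. \<iota> \<circ> inv p) ` ?I \<subseteq> ?I" using permutes_inj[OF permutes_inv[OF p]] by (auto intro: inj_compose)
      qed
      from sum.reindex_bij_betw[OF this, of "\<lambda>\<iota>. of_int (sign p) * c \<iota> * (\<Prod>k\<in>UNIV. w (p k) $ \<iota> k)"]
      show ?thesis by simp
    qed
    also have "\<dots> = (\<Sum>\<kappa>\<in>?I. P \<kappa> * c \<kappa>)"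
    proof (rule sum.cong[OF refl])
      fix \<kappa> :: "'d \<Rightarrow> 'n" assume "\<kappa> \<in> ?I"
      have "c (\<kappa> \<circ> p) = f ((\<lambda>j. axis (\<kappa> j) 1) \<circ> p)" unfolding c_def by (simp add: o_def)
      also have "\<dots> = of_int (sign p) * c \<kappa>" unfolding c_def by (rule alt_perm[OF lin alt p])
      finally have 1: "c (\<kappa> \<circ> p) = of_int (sign p) * c \<kappa>" .
      have 2: "(\<Prod>k\<in>UNIV. w (p k) $ (\<kappa> \<circ> p) k) = P \<kappa>"
        unfolding P_def using prod.permute[OF p, of "\<lambda>j. w j $ \<kappa> j"] by (simp add: o_def)
      have 3: "real_of_int (sign p) * real_of_int (sign p) = 1"
        by (metis of_int_1 of_int_mult sign_idempotent)
      show "of_int (sign p) * c (\<kappa> \<circ> p) * (\<Prod>k\<in>UNIV. w (p k) $ (\<kappa> \<circ> p) k) = P \<kappa> * c \<kappa>"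
        unfolding 1 2 using 3 by (simp add: algebra_simps)
    qed
    finally show ?thesis .
  qed
  have "(\<Sum>\<iota>\<in>?I. c \<iota> * det (\<chi> k j. w j $ \<iota> k)) =
        (\<Sum>\<iota>\<in>?I. \<Sum>p\<in>?Pm. of_int (sign p) * c \<iota> * (\<Prod>k\<in>UNIV. w (p k) $ \<iota> k))"
    unfolding det_def by (simp add: sum_distrib_left algebra_simps)
  also have "\<dots> = (\<Sum>p\<in>?Pm. \<Sum>\<iota>\<in>?I. of_int (sign p) * c \<iota> * (\<Prod>k\<in>UNIV. w (p k) $ \<iota> k))"
    by (rule sum.swap)
  also have "\<dots> = (\<Sum>p\<in>?Pm. \<Sum>\<iota>\<in>?I. P \<iota> * c \<iota>)"
    using inner by simp
  also have "\<dots> = fact CARD('d) * f w"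
    using card_permutations[of "UNIV::'d set" "CARD('d)"] s1 by simp
  finally show ?thesis unfolding c_def by simp
qed

lemma compact_std_simplex: "compact (std_simplex :: (real ^ 'd) set)"
  unfolding compact_eq_bounded_closed
proof (rule conjI)
  show "bounded (std_simplex :: (real ^ 'd) set)"
  proof (rule boundedI)
    fix x :: "real ^ 'd" assume x: "x \<in> std_simplex"
    have "norm x \<le> (\<Sum>i\<in>UNIV. \<bar>x $ i\<bar>)" by (rule norm_le_l1_cart)
    also have "\<dots> = (\<Sum>i\<in>UNIV. x $ i)" using x by (simp add: std_simplex_def)
    also have "\<dots> \<le> 1" using x by (simp add: std_simplex_def)
    finally show "norm x \<le> 1" .
  qed
  have "std_simplex = (\<Inter>i. {x :: real ^ 'd. 0 \<le> x $ i}) \<inter> {x. (\<Sum>i\<in>UNIV. x $ i) \<le> 1}"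
    by (auto simp: std_simplex_def)
  moreover have "closed \<dots>"
    by (intro closed_Int closed_INT closed_Collect_le continuous_on_sum continuous_intros)
       (auto simp: closed_halfspace_component_ge_cart)
  ultimately show "closed (std_simplex :: (real ^ 'd) set)" by simp
qed

lemma det_dform: "continuous_dform K (\<lambda>x (v :: 'd::finite \<Rightarrow> real ^ 'n). det (\<chi> k j. v j $ \<iota> k :: real ^ 'd ^ 'd))"
  unfolding continuous_dform_def
proof (intro conjI ballI allI impI)
  fix x and v :: "'d \<Rightarrow> real ^ 'n" and i :: 'd
  define U where "U u = (\<chi> k. u $ \<iota> k :: real ^ 'd)" for u :: "real ^ 'n"
  define R where "R j = (\<chi> k. v j $ \<iota> k :: real ^ 'd)" for j
  have e: "(\<chi> k j. (v(i := u)) j $ \<iota> k :: real ^ 'd ^ 'd) = transpose (\<chi> j. if j = i then U u else R j)" for u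
    by (simp add: transpose_def vec_eq_iff U_def R_def)
  show "linear (\<lambda>u. det (\<chi> k j. (v(i := u)) j $ \<iota> k :: real ^ 'd ^ 'd))"
    unfolding e det_transpose
  proof (rule linearI)
    fix a b :: "real ^ 'n" and r :: real
    have eqa: "U (a + b) = U a + U b" by (simp add: U_def vec_eq_iff)
    show "det (\<chi> j. if j = i then U (a + b) else R j) = det (\<chi> j. if j = i then U a else R j) + det (\<chi> j. if j = i then U b else R j)"
      unfolding eqa by (rule det_row_add[of i "\<lambda>_. U a" "\<lambda>_. U b" R])
    have eqm: "U (r *\<^sub>R a) = r *s U a" by (simp add: U_def vec_eq_iff)
    show "det (\<chi> j. if j = i then U (r *\<^sub>R a) else R j) = r *\<^sub>R det (\<chi> j. if j = i then U a else R j)"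
    proof -
      have "det (\<chi> j. if j = i then U (r *\<^sub>R a) else R j) = det (\<chi> j. if j = i then r *s U a else R j)"
        unfolding eqm ..
      also have "\<dots> = r * det (\<chi> j. if j = i then U a else R j)"
        by (rule det_row_mul[of i r "\<lambda>_. U a" R])
      finally show ?thesis by simp
    qed
  qed
next
  fix x and v :: "'d \<Rightarrow> real ^ 'n" and i j :: 'd
  assume "i \<noteq> j \<and> v i = v j"
  then show "det (\<chi> k j. v j $ \<iota> k :: real ^ 'd ^ 'd) = 0"
    by (intro det_identical_columns[of i j]) (auto simp: column_def vec_eq_iff)
next
  fix v :: "'d \<Rightarrow> real ^ 'n"
  show "continuous_on K (\<lambda>x. det (\<chi> k j. v j $ \<iota> k :: real ^ 'd ^ 'd))" by (rule continuous_on_const)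
qed

theorem lemma2p3:
  fixes \<sigma> :: "real ^ 'd \<Rightarrow> real ^ 'n"
  assumes "continuous_on std_simplex \<sigma>"
    and "\<And>F. F face_of std_simplex \<Longrightarrow> C1_on \<sigma> (rel_interior F)"
  shows "finite_volume \<sigma> \<longleftrightarrow>
         (\<forall>\<iota> :: 'd \<Rightarrow> 'n. inj \<iota> \<longrightarrow>
            pullback_coord_coeff \<iota> \<sigma> absolutely_integrable_on interior std_simplex)"
proof
  assume fv: "finite_volume \<sigma>"
  show "\<forall>\<iota> :: 'd \<Rightarrow> 'n. inj \<iota> \<longrightarrow> pullback_coord_coeff \<iota> \<sigma> absolutely_integrable_on interior std_simplex"
  proof (intro allI impI)
    fix \<iota> :: "'d \<Rightarrow> 'n"
    have "pullback_coeff (\<lambda>x (v :: 'd \<Rightarrow> real ^ 'n). det (\<chi> k j. v j $ \<iota> k :: real ^ 'd ^ 'd)) \<sigma>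
          absolutely_integrable_on interior std_simplex"
      using fv[unfolded finite_volume_def, rule_format, OF det_dform] .
    moreover have "pullback_coeff (\<lambda>x (v :: 'd \<Rightarrow> real ^ 'n). det (\<chi> k j. v j $ \<iota> k :: real ^ 'd ^ 'd)) \<sigma>
        = pullback_coord_coeff \<iota> \<sigma>"
      by (simp add: fun_eq_iff pullback_coeff_def pullback_coord_coeff_def)
    ultimately show "pullback_coord_coeff \<iota> \<sigma> absolutely_integrable_on interior std_simplex" by simp
  qed
next
  assume H: "\<forall>\<iota> :: 'd \<Rightarrow> 'n. inj \<iota> \<longrightarrow> pullback_coord_coeff \<iota> \<sigma> absolutely_integrable_on interior std_simplex"
  let ?S = "interior (std_simplex :: (real ^ 'd) set)"
  have Sl: "?S \<in> sets lebesgue"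
    by (rule sets_completionI_sets) (simp add: borel_open)
  have Ssub: "?S \<subseteq> std_simplex" by (rule interior_subset)
  show "finite_volume \<sigma>"
    unfolding finite_volume_def
  proof (intro allI impI)
    fix \<omega> :: "real ^ 'n \<Rightarrow> ('d \<Rightarrow> real ^ 'n) \<Rightarrow> real"
    assume \<omega>: "continuous_dform (\<sigma> ` std_simplex) \<omega>"
    let ?I = "{\<iota>::'d\<Rightarrow>'n. inj \<iota>}"
    define c where "c \<iota> a = \<omega> (\<sigma> a) (\<lambda>j. axis (\<iota> j) 1)" for \<iota> :: "'d \<Rightarrow> 'n" and a
    have cc: "continuous_on std_simplex (c \<iota>)" for \<iota>
    proof -
      have "continuous_on (\<sigma> ` std_simplex) (\<lambda>x. \<omega> x (\<lambda>j. axis (\<iota> j) 1))"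
        using \<omega> unfolding continuous_dform_def by (rule conjunct2[THEN spec])
      then show ?thesis unfolding c_def
        by (rule continuous_on_compose2[OF _ assms(1)]) (rule subset_refl)
    qed
    have hterm: "(\<lambda>a. c \<iota> a * pullback_coord_coeff \<iota> \<sigma> a) absolutely_integrable_on ?S" if "inj \<iota>" for \<iota>
    proof (rule absolutely_integrable_bounded_measurable_product[OF bilinear_times])
      show "c \<iota> \<in> borel_measurable (lebesgue_on ?S)"
        by (rule continuous_imp_measurable_on_sets_lebesgue[OF continuous_on_subset[OF cc Ssub] Sl])
      show "?S \<in> sets lebesgue" by (rule Sl)
      have "bounded (c \<iota> ` std_simplex)"
        by (rule compact_imp_bounded[OF compact_continuous_image[OF cc compact_std_simplex]])
      then show "bounded (c \<iota> ` ?S)" by (rule bounded_subset[OF _ image_mono[OF Ssub]])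
      show "pullback_coord_coeff \<iota> \<sigma> absolutely_integrable_on ?S" using H[rule_format, OF that] .
    qed
    have "(\<lambda>a. (\<Sum>\<iota>\<in>?I. c \<iota> a * pullback_coord_coeff \<iota> \<sigma> a)) absolutely_integrable_on ?S"
      by (rule absolutely_integrable_sum) (simp_all add: hterm)
    then have "(\<lambda>a. (1 / fact CARD('d)) *\<^sub>R (\<Sum>\<iota>\<in>?I. c \<iota> a * pullback_coord_coeff \<iota> \<sigma> a)) absolutely_integrable_on ?S"
      by (rule absolutely_integrable_scaleR_left)
    moreover have "pullback_coeff \<omega> \<sigma> a = (1 / fact CARD('d)) *\<^sub>R (\<Sum>\<iota>\<in>?I. c \<iota> a * pullback_coord_coeff \<iota> \<sigma> a)"
      if a: "a \<in> ?S" for a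
    proof -
      have x: "\<sigma> a \<in> \<sigma> ` std_simplex" by (rule imageI[OF subsetD[OF Ssub a]])
      have lx: "(\<forall>v i. linear (\<lambda>u. \<omega> (\<sigma> a) (v(i := u)))) \<and> (\<forall>v i j. i \<noteq> j \<and> v i = v j \<longrightarrow> \<omega> (\<sigma> a) v = 0)"
        using \<omega> x unfolding continuous_dform_def by (rule conjunct1[THEN bspec])
      have lin: "\<And>v i. linear (\<lambda>u. \<omega> (\<sigma> a) (v(i := u)))" by (rule lx[THEN conjunct1, rule_format])
      have alt: "\<And>v i j. i \<noteq> j \<Longrightarrow> v i = v j \<Longrightarrow> \<omega> (\<sigma> a) v = 0" using lx[THEN conjunct2] by metis
      show ?thesis
        unfolding pullback_coeff_def pullback_coord_coeff_def c_def real_scaleR_def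
        by (rule alt_det_sum[where f="\<omega> (\<sigma> a)", OF lin alt])
    qed
    ultimately show "pullback_coeff \<omega> \<sigma> absolutely_integrable_on ?S"
      by (rule absolutely_integrable_spike[OF _ negligible_empty]) simp_all
  qed
qed

end
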